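(* Let $f\in H^2(\mathbb{D})$. Then $|\langle f,e_{n,a}\rangle|\to 0$ as $|a|\to 1$, uniformly in $n\in\mathbb{N}$; that is, for every $\varepsilon>0$ there is $r<1$ such that $|\langle f,e_{n,a}\rangle|<\varepsilon$ for all $a\in\mathbb{D}$ with $|a|>r$ and all $n\in\mathbb{N}$.
   Context: $\mathbb{D}$ is the open unit disc; $H^2(\mathbb{D})$ the Hardy space with inner product $\langle f,g\rangle=\frac{1}{2\pi}\int_0^{2\pi}f(e^{it})\overline{g(e^{it})}\,dt$. For $n\in\mathbb{N}=\{0,1,\dots\}$ and $a\in\mathbb{D}$, $k_{n,a}(z)=\left(\frac{\partial}{\partial\overline{a}}\right)^n\frac{1}{1-\overline{a}z}=\frac{n!\,z^n}{(1-\overline{a}z)^{n+1}}$ and $e_{n,a}=k_{n,a}/\|k_{n,a}\|$. *)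

theory Defs
  imports "HOL-Complex_Analysis.Complex_Analysis"
begin

definition hardy2 :: "(complex \<Rightarrow> complex) set" where
  "hardy2 = {f. f holomorphic_on ball 0 1 \<and>
     (\<exists>B. \<forall>r\<in>{0<..<1::real}.
        integral {0..2*pi} (\<lambda>t. (cmod (f (complex_of_real r * cis t)))^2) / (2*pi) \<le> B)}"

text \<open>Inner product of H^2: the boundary integral, realised as the radial limit
  of the circle integrals (this equals the boundary-value integral on H^2).\<close>
definition h2_inner :: "(complex \<Rightarrow> complex) \<Rightarrow> (complex \<Rightarrow> complex) \<Rightarrow> complex" where
  "h2_inner f g = Lim (at_left (1::real))
     (\<lambda>r. integral {0..2*pi}
        (\<lambda>t. f (complex_of_real r * cis t) * cnj (g (complex_of_real r * cis t))) / (2*pi))"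

definition h2_norm :: "(complex \<Rightarrow> complex) \<Rightarrow> real" where
  "h2_norm f = sqrt (Re (h2_inner f f))"

definition kern :: "nat \<Rightarrow> complex \<Rightarrow> complex \<Rightarrow> complex" where
  "kern n a z = fact n * z ^ n / (1 - cnj a * z) ^ (n + 1)"

definition ekern :: "nat \<Rightarrow> complex \<Rightarrow> complex \<Rightarrow> complex" where
  "ekern n a z = kern n a z / complex_of_real (h2_norm (kern n a))"

end

theory Submission
  imports Defs
begin


lemma cis_vd: "((\<lambda>t. cis (x*t)) has_vector_derivative (\<i> * of_real x * cis (x*t))) (at t within S)"
proof -
  have "((\<lambda>t. cis (x*t)) has_vector_derivative (\<i> * of_real x * cis (x*t))) (at t)"
    unfolding cis_conv_exp
    by (auto intro!: derivative_eq_intros has_vector_derivative_real_field simp: field_simps)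
  then show ?thesis by (rule has_vector_derivative_at_within)
qed

lemma cis_int_integral:
  fixes j :: int
  shows "((\<lambda>t. cis (of_int j * t)) has_integral (if j = 0 then 2*pi else 0)) {0..2*pi}"
proof (cases "j = 0")
  case True
  then show ?thesis using has_integral_const_real[of "1::complex" 0 "2*pi"] by (simp add: scaleR_conv_of_real)
next
  case False
  have "((\<lambda>t. cis (of_int j * t)) has_integral
     (cis (of_int j * (2*pi)) / (\<i> * of_int j) - cis (of_int j * 0) / (\<i> * of_int j))) {0..2*pi}"
    apply (rule fundamental_theorem_of_calculus)
     apply simp
    using cis_vd[of "of_int j"] False
    by (auto intro!: derivative_eq_intros simp: field_simps)
  moreover have "cis (of_int j * (2*pi)) = 1"
    by (metis cis_multiple_2pi Ints_of_int mult.commute)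
  ultimately show ?thesis using False by simp
qed

lemma cis_orth:
  fixes m k :: nat
  shows "((\<lambda>t. cis (real m * t) * cnj (cis (real k * t))) has_integral (if m = k then 2*pi else 0)) {0..2*pi}"
proof -
  have "cis (real m * t) * cnj (cis (real k * t)) = cis (of_int (int m - int k) * t)" for t
    by (simp add: cis_cnj cis_mult algebra_simps)
  then show ?thesis using cis_int_integral[of "int m - int k"] by simp
qed

lemma integral_series:
  fixes u :: "nat \<Rightarrow> real \<Rightarrow> complex"
  assumes c: "\<And>k. continuous_on {a..b} (u k)"
    and b: "\<And>k t. t \<in> {a..b} \<Longrightarrow> norm (u k t) \<le> M k"
    and M: "summable M"
  shows "((\<lambda>t. \<Sum>k. u k t) has_integral (\<Sum>k. integral {a..b} (u k))) {a..b}"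
    and "(\<lambda>k. integral {a..b} (u k)) sums integral {a..b} (\<lambda>t. \<Sum>k. u k t)"
proof -
  have U: "uniform_limit {a..b} (\<lambda>n t. \<Sum>i<n. u i t) (\<lambda>t. \<Sum>k. u k t) sequentially"
    using b M by (rule Weierstrass_m_test)
  obtain I J where I: "\<And>n. ((\<lambda>t. \<Sum>i<n. u i t) has_integral I n) {a..b}"
    and J: "((\<lambda>t. \<Sum>k. u k t) has_integral J) {a..b}" and IJ: "I \<longlonglongrightarrow> J"
    using uniform_limit_integral[OF U] c by (auto intro!: continuous_on_sum)
  have "I n = (\<Sum>i<n. integral {a..b} (u i))" for n
  proof -
    have "((\<lambda>t. \<Sum>i<n. u i t) has_integral (\<Sum>i<n. integral {a..b} (u i))) {a..b}"
      by (intro has_integral_sum) (auto intro!: integrable_integral integrable_continuous_interval c)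
    then show ?thesis using I[of n] by (metis has_integral_unique)
  qed
  then have "I = (\<lambda>n. \<Sum>i<n. integral {a..b} (u i))" by auto
  then have S: "(\<lambda>k. integral {a..b} (u k)) sums J"
    using IJ by (simp add: sums_def)
  then show "((\<lambda>t. \<Sum>k. u k t) has_integral (\<Sum>k. integral {a..b} (u k))) {a..b}"
    using J sums_unique by metis
  show "(\<lambda>k. integral {a..b} (u k)) sums integral {a..b} (\<lambda>t. \<Sum>k. u k t)"
    using S J integral_unique by metis
qed

lemma abs_summ:
  fixes c :: "nat \<Rightarrow> complex"
  assumes sF: "\<And>z. norm z < 1 \<Longrightarrow> (\<lambda>k. c k * z^k) sums F z"
    and r: "0 \<le> r" "r < 1"
  shows "summable (\<lambda>k. norm (c k) * r^k)"
proof -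
  have "norm (complex_of_real ((1+r)/2)) = \<bar>(1+r)/2\<bar>" by (simp only: norm_of_real)
  moreover have "\<bar>(1+r)/2\<bar> < 1" using r by (simp add: abs_less_iff)
  ultimately have "norm (complex_of_real ((1+r)/2)) < 1" by (simp only:)
  then have "summable (\<lambda>k. c k * (of_real ((1+r)/2))^k)"
    using sF sums_summable by blast
  moreover have "norm (complex_of_real r) < norm (complex_of_real ((1+r)/2))"
    using r by (simp only: norm_of_real) (simp add: abs_less_iff)
  ultimately have "summable (\<lambda>n. norm (c n * (complex_of_real r) ^ n))"
    by (rule powser_insidea)
  then show ?thesis using r by (simp add: norm_power norm_mult)
qed

lemma cont_circ:
  assumes cF: "continuous_on (ball 0 1) F" and r: "0 \<le> r" "r < 1"
  shows "continuous_on S (\<lambda>t. F (of_real r * cis t))"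
proof (rule continuous_on_compose2[OF cF])
  show "continuous_on S (\<lambda>t. complex_of_real r * cis t)"
    by (intro continuous_intros)
  show "(\<lambda>t. complex_of_real r * cis t) ` S \<subseteq> ball 0 1"
    using r by (auto simp: norm_mult)
qed

lemma coeff_integral:
  fixes F :: "complex \<Rightarrow> complex" and c :: "nat \<Rightarrow> complex"
  assumes cF: "continuous_on (ball 0 1) F"
    and sF: "\<And>z. norm z < 1 \<Longrightarrow> (\<lambda>k. c k * z^k) sums F z"
    and r: "0 \<le> r" "r < 1"
  shows "integral {0..2*pi} (\<lambda>t. F (of_real r * cis t) * cnj (cis (real k * t))) = 2 * pi * c k * r^k"
proof -
  define u where "u m t = c m * of_real (r^m) * (cis (real m * t) * cnj (cis (real k * t)))" for m t
  have AS: "summable (\<lambda>m. norm (c m) * r^m)" using abs_summ[OF sF r] .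
  have I: "(\<lambda>m. integral {0..2*pi} (u m)) sums integral {0..2*pi} (\<lambda>t. \<Sum>m. u m t)"
    by (rule integral_series(2)[OF _ _ AS]) (use r in \<open>auto simp: u_def norm_mult norm_power intro!: continuous_intros\<close>)
  have "integral {0..2*pi} (u m) = (if m = k then 2 * pi * c k * r^k else 0)" for m
    unfolding u_def
    using has_integral_mult_right[OF cis_orth[of m k], of "c m * of_real (r^m)"]
    by (auto dest!: integral_unique)
  then have "(\<lambda>m. integral {0..2*pi} (u m)) = (\<lambda>m. if m = k then 2 * pi * c k * r^k else 0)" by auto
  then have "(\<lambda>m. integral {0..2*pi} (u m)) sums (2 * pi * c k * r^k)"
    using sums_single[of k "\<lambda>_. 2 * pi * c k * r^k"] by simp
  moreover have "(\<Sum>m. u m t) = F (of_real r * cis t) * cnj (cis (real k * t))" for t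
  proof -
    have "(\<lambda>m. c m * (of_real r * cis t)^m) sums F (of_real r * cis t)"
      using r by (intro sF) (simp add: norm_mult)
    then have "(\<lambda>m. c m * (of_real r * cis t)^m * cnj (cis (real k * t))) sums (F (of_real r * cis t) * cnj (cis (real k * t)))"
      by (rule sums_mult2)
    moreover have "c m * (of_real r * cis t)^m * cnj (cis (real k * t)) = u m t" for m
      using Complex.DeMoivre[of t m] by (simp add: u_def power_mult_distrib)
    ultimately show ?thesis by (simp add: sums_iff)
  qed
  ultimately show ?thesis using I sums_unique2 by auto
qed

lemma alg_aux:
  fixes r :: real and c d :: complex
  shows "cnj d * complex_of_real (r ^ k) * (complex_of_real (2 * pi) * c * complex_of_real r ^ k) =
     complex_of_real (2 * pi) * (c * cnj d * complex_of_real (r ^ (2 * k)))"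
proof -
  have e: "r^(2*k) = r^k * r^k" by (simp add: mult_2 power_add)
  have e2: "complex_of_real (r^(2*k)) = of_real (r^k) * of_real (r^k)" by (simp add: e)
  show ?thesis  by (unfold e2, simp only: of_real_power mult_ac)
qed

lemma circle_parseval:
  fixes F G :: "complex \<Rightarrow> complex" and c d :: "nat \<Rightarrow> complex"
  assumes cF: "continuous_on (ball 0 1) F"
    and sF: "\<And>z. norm z < 1 \<Longrightarrow> (\<lambda>k. c k * z^k) sums F z"
    and sG: "\<And>z. norm z < 1 \<Longrightarrow> (\<lambda>k. d k * z^k) sums G z"
    and r: "0 \<le> r" "r < 1"
  shows "(\<lambda>k. c k * cnj (d k) * of_real (r^(2*k))) sums
     (integral {0..2*pi} (\<lambda>t. F (of_real r * cis t) * cnj (G (of_real r * cis t))) / (2*pi))"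
proof -
  define B where "B = (\<Sum>m. norm (c m) * r^m)"
  have AS: "summable (\<lambda>m. norm (c m) * r^m)" using abs_summ[OF sF r] .
  have ASd: "summable (\<lambda>m. norm (d m) * r^m)" using abs_summ[OF sG r] .
  have FB: "norm (F (of_real r * cis t)) \<le> B" for t
  proof -
    have "(\<lambda>m. c m * (of_real r * cis t)^m) sums F (of_real r * cis t)"
      using r by (intro sF) (simp add: norm_mult)
    then have "F (of_real r * cis t) = (\<Sum>m. c m * (of_real r * cis t)^m)" by (simp add: sums_iff)
    also have "norm \<dots> \<le> (\<Sum>m. norm (c m * (of_real r * cis t)^m))"
      using AS r by (intro summable_norm) (simp_all add: norm_mult norm_power)
    also have "\<dots> = B" using r by (simp add: B_def norm_mult norm_power)
    finally show ?thesis .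
  qed
  define u where "u k t = cnj (d k) * of_real (r^k) * (F (of_real r * cis t) * cnj (cis (real k * t)))" for k t
  have I: "(\<lambda>k. integral {0..2*pi} (u k)) sums integral {0..2*pi} (\<lambda>t. \<Sum>k. u k t)"
  proof (rule integral_series(2)[of _ _ _ "\<lambda>k. B * (norm (d k) * r^k)"])
    show "continuous_on {0..2*pi} (u k)" for k
      unfolding u_def by (intro continuous_intros cont_circ[OF cF r])
    show "norm (u k t) \<le> B * (norm (d k) * r ^ k)" for k t
    proof -
      have "norm (F (of_real r * cis t)) * (norm (d k) * r^k) \<le> B * (norm (d k) * r^k)"
        by (rule mult_right_mono[OF FB]) (use r in simp)
      moreover have "norm (u k t) = norm (F (of_real r * cis t)) * (norm (d k) * r^k)"
        using r by (simp add: u_def norm_mult norm_power)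
      ultimately show ?thesis by simp
    qed
    show "summable (\<lambda>k. B * (norm (d k) * r ^ k))" using ASd by (rule summable_mult)
  qed
  have "integral {0..2*pi} (u k) = 2 * pi * (c k * cnj (d k) * of_real (r^(2*k)))" for k
  proof -
    have "integral {0..2*pi} (u k) = cnj (d k) * of_real (r^k) *
       integral {0..2*pi} (\<lambda>t. F (of_real r * cis t) * cnj (cis (real k * t)))"
      unfolding u_def by (rule integral_mult_right)
    also have "\<dots> = 2 * pi * (c k * cnj (d k) * of_real (r^(2*k)))"
      by (subst coeff_integral[OF cF sF r], simp, rule alg_aux)
    finally show ?thesis .
  qed
  moreover have "(\<Sum>k. u k t) = F (of_real r * cis t) * cnj (G (of_real r * cis t))" for t
  proof -
    have "(\<lambda>m. d m * (of_real r * cis t)^m) sums G (of_real r * cis t)"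
      using r by (intro sG) (simp add: norm_mult)
    then have "(\<lambda>m. cnj (d m * (of_real r * cis t)^m)) sums cnj (G (of_real r * cis t))"
      by (simp only: sums_cnj)
    then have "(\<lambda>m. F (of_real r * cis t) * cnj (d m * (of_real r * cis t)^m)) sums (F (of_real r * cis t) * cnj (G (of_real r * cis t)))"
      by (rule sums_mult)
    moreover have "F (of_real r * cis t) * cnj (d m * (of_real r * cis t)^m) = u m t" for m
      using Complex.DeMoivre[of t m] by (simp add: u_def power_mult_distrib)
    ultimately have "(\<lambda>m. u m t) sums (F (of_real r * cis t) * cnj (G (of_real r * cis t)))"
      by simp
    then show ?thesis by (rule sums_unique[symmetric])
  qed
  ultimately have "(\<lambda>k. 2 * pi * (c k * cnj (d k) * of_real (r^(2*k)))) sums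
      integral {0..2*pi} (\<lambda>t. F (of_real r * cis t) * cnj (G (of_real r * cis t)))"
    using I by simp
  from sums_divide[OF this, of "2*pi"] show ?thesis by simp
qed

lemma abel_lim:
  fixes w :: "nat \<Rightarrow> complex"
  assumes S: "summable (\<lambda>k. norm (w k))"
  shows "((\<lambda>r. \<Sum>k. w k * of_real (r^(2*k))) \<longlongrightarrow> (\<Sum>k. w k)) (at_left 1)"
proof -
  have U: "uniform_limit {0..1} (\<lambda>n r. \<Sum>k<n. w k * of_real (r^(2*k))) (\<lambda>r. \<Sum>k. w k * of_real (r^(2*k))) sequentially"
  proof (rule Weierstrass_m_test[OF _ S])
    fix k and r :: real assume "r \<in> {0..1}"
    then have "r^(2*k) \<le> 1" by (simp add: power_le_one)
    moreover have "norm (complex_of_real (r^(2*k))) = \<bar>r^(2*k)\<bar>" by (simp only: norm_of_real)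
    ultimately have "norm (complex_of_real (r^(2*k))) \<le> 1"
      using \<open>r \<in> {0..1}\<close> by simp
    then show "norm (w k * of_real (r^(2*k))) \<le> norm (w k)"
      unfolding norm_mult by (rule mult_left_le) simp
  qed
  have "continuous_on {0..1} (\<lambda>r. \<Sum>k. w k * of_real (r^(2*k)))"
    by (rule uniform_limit_theorem[OF _ U]) (auto intro!: always_eventually continuous_intros)
  from continuous_on_Icc_at_leftD[OF this] show ?thesis by simp
qed

lemma h2_inner_series:
  fixes F G :: "complex \<Rightarrow> complex" and c d :: "nat \<Rightarrow> complex"
  assumes cF: "continuous_on (ball 0 1) F"
    and sF: "\<And>z. norm z < 1 \<Longrightarrow> (\<lambda>k. c k * z^k) sums F z"
    and sG: "\<And>z. norm z < 1 \<Longrightarrow> (\<lambda>k. d k * z^k) sums G z"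
    and c2: "summable (\<lambda>k. norm (c k)^2)" and d2: "summable (\<lambda>k. norm (d k)^2)"
  shows "h2_inner F G = (\<Sum>k. c k * cnj (d k))"
proof -
  have S: "summable (\<lambda>k. norm (c k * cnj (d k)))"
  proof (rule summable_comparison_test'[OF summable_add[OF c2 d2]])
    fix k
    have "2 * (norm (c k) * norm (d k)) \<le> norm (c k)^2 + norm (d k)^2"
      using sum_squares_bound[of "norm (c k)" "norm (d k)"] by (simp add: mult.assoc)
    moreover have "0 \<le> norm (c k) * norm (d k)" by simp
    moreover have "norm (norm (c k * cnj (d k))) = norm (c k) * norm (d k)" by (simp add: norm_mult)
    ultimately show "norm (norm (c k * cnj (d k))) \<le> norm (c k)^2 + norm (d k)^2"
      by linarith
  qed
  have L: "((\<lambda>r. \<Sum>k. c k * cnj (d k) * of_real (r^(2*k))) \<longlongrightarrow> (\<Sum>k. c k * cnj (d k))) (at_left 1)"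
    by (rule abel_lim[OF S])
  have ev: "eventually (\<lambda>x. x \<in> {0<..<1}) (at_left (1::real))"
    by (rule eventually_at_left_real) simp
  have "\<forall>\<^sub>F r in at_left 1. (\<Sum>k. c k * cnj (d k) * of_real (r^(2*k))) =
     integral {0..2*pi} (\<lambda>t. F (of_real r * cis t) * cnj (G (of_real r * cis t))) / (2*pi)"
    using ev
  proof eventually_elim
    case (elim r) then show ?case using circle_parseval[OF cF sF sG, of r] by (simp add: sums_iff)
  qed
  from tendsto_cong[OF this] L
  have "((\<lambda>r. integral {0..2*pi} (\<lambda>t. F (of_real r * cis t) * cnj (G (of_real r * cis t))) / (2*pi))
     \<longlongrightarrow> (\<Sum>k. c k * cnj (d k))) (at_left 1)" by simp
  then show ?thesis unfolding h2_inner_def by (intro tendsto_Lim) auto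
qed

lemma hardy_coeffs:
  assumes hf: "f \<in> hardy2"
  shows "continuous_on (ball 0 1) f"
    and "\<And>z. norm z < 1 \<Longrightarrow> (\<lambda>k. (deriv ^^ k) f 0 / fact k * z^k) sums f z"
    and "summable (\<lambda>k. norm ((deriv ^^ k) f 0 / fact k)^2)"
proof -
  define c where "c k = (deriv ^^ k) f 0 / fact k" for k
  have holf: "f holomorphic_on ball 0 1" using hf by (simp add: hardy2_def)
  then show cF: "continuous_on (ball 0 1) f" by (rule holomorphic_on_imp_continuous_on)
  show sF: "(\<lambda>k. (deriv ^^ k) f 0 / fact k * z^k) sums f z" if "norm z < 1" for z
    using holomorphic_power_series[OF holf, of z] that by simp
  obtain B where B: "\<And>r. r \<in> {0<..<1} \<Longrightarrow>
     integral {0..2*pi} (\<lambda>t. (cmod (f (complex_of_real r * cis t)))^2) / (2*pi) \<le> B"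
    using hf unfolding hardy2_def by blast
  have part: "(\<Sum>k<N. norm (c k)^2 * r^(2*k)) \<le> B" if r: "r \<in> {0<..<1}" for r N
  proof -
    define I where "I = integral {0..2*pi} (\<lambda>t. (cmod (f (complex_of_real r * cis t)))^2)"
    have "(\<lambda>t. (cmod (f (complex_of_real r * cis t)))^2) integrable_on {0..2*pi}"
      using r by (intro integrable_continuous_interval continuous_intros cont_circ[OF cF]) auto
    then have "((\<lambda>t. complex_of_real ((cmod (f (complex_of_real r * cis t)))^2)) has_integral of_real I) {0..2*pi}"
      unfolding I_def by (intro has_integral_of_real integrable_integral)
    then have "((\<lambda>t. f (complex_of_real r * cis t) * cnj (f (complex_of_real r * cis t))) has_integral of_real I) {0..2*pi}"
      by (simp only: complex_norm_square)
    then have "integral {0..2*pi} (\<lambda>t. f (complex_of_real r * cis t) * cnj (f (complex_of_real r * cis t))) = of_real I"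
      by (rule integral_unique)
    moreover have "(\<lambda>k. c k * cnj (c k) * of_real (r^(2*k))) sums
      (integral {0..2*pi} (\<lambda>t. f (of_real r * cis t) * cnj (f (of_real r * cis t))) / (2*pi))"
      using r by (intro circle_parseval[OF cF]) (auto simp only: c_def intro: sF, auto)
    moreover have "complex_of_real (norm (c k)^2 * r^(2*k)) = c k * cnj (c k) * of_real (r^(2*k))" for k
      by (simp only: of_real_mult complex_norm_square)
    moreover have "complex_of_real (I / (2*pi)) = complex_of_real I / complex_of_real (2*pi)"
      by (rule of_real_divide)
    ultimately have "(\<lambda>k. complex_of_real (norm (c k)^2 * r^(2*k))) sums complex_of_real (I / (2*pi))"
      by (simp only:)
    then have S: "(\<lambda>k. norm (c k)^2 * r^(2*k)) sums (I / (2*pi))"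
      by (simp only: sums_of_real_iff)
    have "(\<Sum>k<N. norm (c k)^2 * r^(2*k)) \<le> I / (2*pi)"
      using S r by (intro sum_le_suminf[where f = "\<lambda>k. norm (c k)^2 * r^(2*k)", simplified sums_unique[OF S, symmetric]])
        (auto simp: sums_iff)
    also have "\<dots> \<le> B" using B[OF r] by (simp add: I_def)
    finally show ?thesis .
  qed
  have "(\<Sum>k<N. norm (c k)^2) \<le> B" for N
  proof (rule tendsto_upperbound)
    show "((\<lambda>r. \<Sum>k<N. norm (c k)^2 * r^(2*k)) \<longlongrightarrow> (\<Sum>k<N. norm (c k)^2)) (at_left (1::real))"
      by (auto intro!: tendsto_eq_intros)
    have ev: "eventually (\<lambda>x. x \<in> {0<..<1}) (at_left (1::real))"
      by (rule eventually_at_left_real) simp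
    then show "\<forall>\<^sub>F r in at_left 1. B \<ge> (\<Sum>k<N. norm (c k)^2 * r^(2*k))"
      by eventually_elim (rule part)
  qed simp
  then show "summable (\<lambda>k. norm ((deriv ^^ k) f 0 / fact k)^2)"
    unfolding c_def[symmetric] by (intro summableI_nonneg_bounded) auto
qed

lemma sum_choose_n: "(\<Sum>i\<le>k. (n + i) choose n) = (Suc n + k) choose (Suc n)"
  by (induct k) auto

lemma binom_series:
  fixes w :: complex
  assumes "norm w < 1"
  shows "(\<lambda>j. of_nat ((n + j) choose n) * w^j) sums (1 / (1 - w)^(Suc n))"
  using assms
proof (induct n arbitrary: w)
  case 0
  then show ?case using geometric_sums[of w] by (simp add: divide_inverse)
next
  case (Suc n)
  have nw: "norm (complex_of_real (norm w)) < 1" using Suc.prems by simp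
  have "summable (\<lambda>j. of_nat ((n + j) choose n) * (complex_of_real (norm w))^j)"
    using Suc.hyps[OF nw] by (rule sums_summable)
  then have "summable (\<lambda>j. complex_of_real (real ((n + j) choose n) * norm w ^ j))" by simp
  then have "summable (\<lambda>j. real ((n + j) choose n) * norm w ^ j)" by (simp only: summable_of_real_iff)
  then have A: "summable (\<lambda>j. norm (of_nat ((n + j) choose n) * w^j))" by (simp add: norm_mult norm_power)
  have B: "summable (\<lambda>j. norm (w^j))" using Suc.prems by (simp add: norm_power summable_geometric)
  from Cauchy_product_sums[OF A B]
  have "(\<lambda>k. \<Sum>i\<le>k. of_nat ((n + i) choose n) * w^i * w^(k-i)) sums
     ((\<Sum>j. of_nat ((n + j) choose n) * w^j) * (\<Sum>j. w^j))" .
  moreover have "(\<Sum>j. of_nat ((n + j) choose n) * w^j) = 1 / (1 - w)^(Suc n)"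
    using Suc.hyps[OF Suc.prems] by (simp add: sums_iff)
  moreover have "(\<Sum>j. w^j) = 1 / (1 - w)"
    using geometric_sums[OF Suc.prems] by (simp add: sums_iff divide_inverse)
  moreover have "(\<Sum>i\<le>k. of_nat ((n + i) choose n) * w^i * w^(k-i)) = of_nat ((Suc n + k) choose Suc n) * w^k" for k
  proof -
    have "(\<Sum>i\<le>k. of_nat ((n + i) choose n) * w^i * w^(k-i)) = (\<Sum>i\<le>k. of_nat ((n + i) choose n) * w^k)"
      by (intro sum.cong refl) (simp add: mult.assoc power_add[symmetric])
    also have "\<dots> = of_nat (\<Sum>i\<le>k. (n + i) choose n) * w^k" by (simp add: sum_distrib_right)
    finally show ?thesis by (simp only: sum_choose_n)
  qed
  ultimately show ?case by (simp add: field_simps)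
qed

definition kd :: "nat \<Rightarrow> complex \<Rightarrow> nat \<Rightarrow> complex" where
  "kd n a k = (if n \<le> k then fact n * of_nat (k choose n) * cnj a ^ (k - n) else 0)"

lemma kern_series:
  assumes a: "norm a < 1" and z: "norm z < 1"
  shows "(\<lambda>k. kd n a k * z^k) sums kern n a z"
proof -
  have "norm a * norm z \<le> norm a" by (rule mult_left_le) (use z in auto)
  then have w: "norm (cnj a * z) < 1" using a by (simp add: norm_mult)
  have "(\<lambda>j. fact n * z^n * (of_nat ((n + j) choose n) * (cnj a * z)^j)) sums (fact n * z^n * (1 / (1 - cnj a * z)^(Suc n)))"
    by (rule sums_mult[OF binom_series[OF w]])
  moreover have "fact n * z^n * (of_nat ((n + j) choose n) * (cnj a * z)^j) = kd n a (j + n) * z^(j + n)" for j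
    by (simp add: kd_def power_add power_mult_distrib add.commute mult_ac)
  moreover have "fact n * z^n * (1 / (1 - cnj a * z)^(Suc n)) = kern n a z"
    by (simp add: kern_def)
  ultimately have "(\<lambda>j. kd n a (j + n) * z^(j + n)) sums kern n a z" by simp
  then show ?thesis by (subst (asm) sums_zero_iff_shift) (auto simp: kd_def)
qed

lemma binom_real:
  fixes x :: real
  assumes "0 \<le> x" "x < 1"
  shows "summable (\<lambda>j. real ((j + n) choose n) * x^j)"
proof -
  have nw: "norm (complex_of_real x) < 1" using assms by simp
  have "summable (\<lambda>j. of_nat ((n + j) choose n) * (complex_of_real x)^j)"
    using binom_series[OF nw] by (rule sums_summable)
  then have "summable (\<lambda>j. complex_of_real (real ((j + n) choose n) * x ^ j))" by (simp add: add.commute)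
  then show ?thesis by (simp only: summable_of_real_iff)
qed

lemma norm_kd_shift: "norm (kd n a (j + n)) = fact n * (real ((j + n) choose n) * norm a ^ j)"
  by (simp add: kd_def norm_mult norm_power)

lemma kd_sq_summable:
  assumes a: "norm a < 1"
  shows "summable (\<lambda>k. norm (kd n a k)^2)"
proof -
  define g where "g j = real ((j + n) choose n) * norm a ^ j" for j
  have gs: "summable g" unfolding g_def using a by (intro binom_real) auto
  have g0: "0 \<le> g j" for j by (simp add: g_def)
  have gM: "g j \<le> suminf g" for j
    using sum_le_suminf[OF gs, of "{j}"] g0 by simp
  have "summable (\<lambda>j. (fact n)^2 * suminf g * g j)" using gs by (intro summable_mult)
  then have "summable (\<lambda>j. norm (kd n a (j + n))^2)"
  proof (rule summable_comparison_test'[where N = 0])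
    fix j
    have "(g j)^2 \<le> suminf g * g j" using gM[of j] g0[of j] by (simp add: power2_eq_square mult_right_mono)
    then have "(fact n)^2 * (g j)^2 \<le> (fact n)^2 * (suminf g * g j)" by (intro mult_left_mono) auto
    then show "norm (norm (kd n a (j + n))^2) \<le> (fact n)^2 * suminf g * g j"
      by (simp add: norm_kd_shift g_def[symmetric] power_mult_distrib mult.assoc)
  qed
  then show ?thesis using summable_iff_shift[where f="\<lambda>k. norm (kd n a k)^2" and k=n] by simp
qed

lemma kd_sq_lower:
  assumes a: "norm a < 1"
  shows "(fact n)^2 / (1 - norm a ^ 2) \<le> (\<Sum>k. norm (kd n a k)^2)"
proof -
  have S: "summable (\<lambda>k. norm (kd n a k)^2)" by (rule kd_sq_summable[OF a])
  have S': "summable (\<lambda>j. norm (kd n a (j + n))^2)"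
    using S summable_iff_shift[where f="\<lambda>k. norm (kd n a k)^2" and k=n] by simp
  have geo: "(\<lambda>j. (fact n)^2 * (norm a ^ 2)^j) sums ((fact n)^2 * (1 / (1 - norm a ^ 2)))"
    by (rule sums_mult, rule geometric_sums) (use a in \<open>simp add: abs_square_less_1\<close>)
  have "(fact n)^2 / (1 - norm a ^ 2) = (\<Sum>j. (fact n)^2 * (norm a ^ 2)^j)"
    using geo by (simp add: sums_iff)
  also have "\<dots> \<le> (\<Sum>j. norm (kd n a (j + n))^2)"
  proof (rule suminf_le[OF _ sums_summable[OF geo] S'])
    fix j
    have "0 < (j + n) choose n" by (simp add: zero_less_binomial_iff)
    then have "1 \<le> real ((j + n) choose n)" by linarith
    then have "1 * norm a ^ j \<le> real ((j + n) choose n) * norm a ^ j"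
      by (rule mult_right_mono) simp
    then have "norm a ^ j \<le> real ((j + n) choose n) * norm a ^ j" by simp
    then have "(norm a ^ j)^2 \<le> (real ((j + n) choose n) * norm a ^ j)^2"
      by (intro power_mono) auto
    then have "(fact n)^2 * (norm a ^ j)^2 \<le> (fact n)^2 * (real ((j + n) choose n) * norm a ^ j)^2"
      by (intro mult_left_mono) auto
    moreover have "(norm a ^ 2)^j = (norm a ^ j)^2"
      by (metis power_mult mult.commute)
    moreover have "norm (kd n a (j + n))^2 = (fact n)^2 * (real ((j + n) choose n) * norm a ^ j)^2"
      by (simp only: norm_kd_shift power_mult_distrib)
    ultimately show "(fact n)^2 * (norm a ^ 2)^j \<le> norm (kd n a (j + n))^2"
      by simp
  qed
  also have "\<dots> \<le> (\<Sum>k. norm (kd n a k)^2)"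
    using suminf_split_initial_segment[OF S, of n] by (simp add: sum_nonneg)
  finally show ?thesis .
qed



lemma kern_cont:
  assumes a: "norm a < 1"
  shows "continuous_on (ball 0 1) (kern n a)"
proof -
  have "(1 - cnj a * z) \<noteq> 0" if "z \<in> ball 0 1" for z
  proof
    assume "1 - cnj a * z = 0"
    then have "cnj a * z = 1" by simp
    then have "norm (cnj a * z) = 1" by simp
    moreover have "norm a * norm z \<le> norm a" by (rule mult_left_le) (use that in auto)
    ultimately show False using a by (simp add: norm_mult)
  qed
  then show ?thesis unfolding kern_def[abs_def]
    by (intro continuous_intros) auto
qed

lemma kd_inner_self:
  assumes a: "norm a < 1"
  shows "(\<Sum>k. kd n a k * cnj (kd n a k)) = complex_of_real (\<Sum>k. norm (kd n a k)^2)"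
proof -
  have "(\<lambda>k. complex_of_real (norm (kd n a k)^2)) sums complex_of_real (\<Sum>k. norm (kd n a k)^2)"
    using summable_sums[OF kd_sq_summable[OF a]] by (simp only: sums_of_real_iff)
  then show ?thesis by (simp only: complex_norm_square sums_iff)
qed

lemma h2_norm_kern:
  assumes a: "norm a < 1"
  shows "h2_norm (kern n a) = sqrt (\<Sum>k. norm (kd n a k)^2)"
proof -
  have "h2_inner (kern n a) (kern n a) = (\<Sum>k. kd n a k * cnj (kd n a k))"
    by (rule h2_inner_series[OF kern_cont[OF a] kern_series[OF a] kern_series[OF a]
          kd_sq_summable[OF a] kd_sq_summable[OF a]])
  then show ?thesis by (simp add: h2_norm_def kd_inner_self[OF a])
qed

lemma inner_ekern:
  assumes hf: "f \<in> hardy2" and a: "norm a < 1"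
  shows "h2_inner f (ekern n a) = (\<Sum>k. (deriv ^^ k) f 0 / fact k *
            cnj (kd n a k / complex_of_real (sqrt (\<Sum>k. norm (kd n a k)^2))))"
proof -
  define N where "N = sqrt (\<Sum>k. norm (kd n a k)^2)"
  have E: "ekern n a = (\<lambda>z. kern n a z / complex_of_real N)"
    by (simp add: ekern_def[abs_def] h2_norm_kern[OF a] N_def)
  have sG: "(\<lambda>k. kd n a k / complex_of_real N * z^k) sums ekern n a z" if "norm z < 1" for z
    using sums_divide[OF kern_series[OF a that], where c = "complex_of_real N"] by (simp add: E field_simps)
  have d2: "summable (\<lambda>k. norm (kd n a k / complex_of_real N)^2)"
    using summable_divide[OF kd_sq_summable[OF a], where c = "N^2"] by (simp add: norm_divide power_divide)
  show ?thesis unfolding N_def[symmetric]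
    by (rule h2_inner_series[OF hardy_coeffs(1,2)[OF hf] sG hardy_coeffs(3)[OF hf] d2])
qed

lemma amgm:
  fixes u v t :: real
  assumes t: "t > 0"
  shows "u * v \<le> (t * u^2 + v^2 / t) / 2"
proof -
  have "2 * (t*u) * v \<le> (t*u)^2 + v^2" by (rule sum_squares_bound)
  then have "t * (2 * (u * v)) \<le> t * (t * u^2 + v^2 / t)"
    using t by (simp add: algebra_simps power2_eq_square)
  then have "2 * (u * v) \<le> t * u^2 + v^2 / t" using t by simp
  then show ?thesis by simp
qed

lemma kd_bound:
  assumes a: "norm a < 1" and k: "k < K"
  shows "norm (kd n a k) \<le> fact n * 2^K"
proof (cases "n \<le> k")
  case True
  have "real (k choose n) \<le> 2^k" using binomial_le_pow2[of k n] by (simp add: of_nat_le_iff[symmetric])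
  also have "(2::real)^k \<le> 2^K" using k by (intro power_increasing) auto
  finally have b: "real (k choose n) \<le> 2^K" .
  have p: "norm a ^ (k - n) \<le> 1" using a by (intro power_le_one) auto
  have "norm (kd n a k) = fact n * (real (k choose n) * norm a ^ (k - n))"
    using True by (simp add: kd_def norm_mult norm_power)
  also have "\<dots> \<le> fact n * (2^K * 1)"
    by (intro mult_left_mono mult_mono b p) auto
  finally show ?thesis by simp
next
  case False
  then show ?thesis by (simp add: kd_def)
qed

lemma final_est:
  fixes c :: "nat \<Rightarrow> complex" and \<epsilon> :: real
  assumes c2: "summable (\<lambda>k. norm (c k)^2)" and e: "\<epsilon> > 0"
  shows "\<exists>r<1. \<forall>a n. norm a < 1 \<and> norm a > r \<longrightarrow>
     norm (\<Sum>k. c k * cnj (kd n a k / complex_of_real (sqrt (\<Sum>k. norm (kd n a k)^2)))) < \<epsilon>"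
proof -
  define \<delta> where "\<delta> = \<epsilon> / 2"
  have \<delta>: "\<delta> > 0" using e by (simp add: \<delta>_def)
  obtain K where K: "norm (\<Sum>i. norm (c (i + K))^2) < \<delta>^2"
    using suminf_exist_split[OF _ c2, of "\<delta>^2"] \<delta> by auto
  define C where "C = (\<Sum>k. norm (c k)^2)"
  have C0: "C \<ge> 0" unfolding C_def by (intro suminf_nonneg[OF c2]) simp
  define Q where "Q = real K * (1 + C) * 2^K"
  define r where "r = max 0 (1 - \<delta>^2 / (2 * (Q^2 + 1)))"
  have Qp: "Q^2 + 1 > 0" by (simp add: add_nonneg_pos)
  have "\<delta>^2 / (2 * (Q^2 + 1)) > 0" using \<delta> Qp by simp
  then have r1: "r < 1" by (simp add: r_def)
  have cb: "norm (c k) \<le> 1 + C" for k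
  proof -
    have "norm (c k)^2 \<le> C" unfolding C_def using sum_le_suminf[OF c2, of "{k}"] by simp
    moreover have "C \<ge> 0" unfolding C_def by (intro suminf_nonneg[OF c2]) simp
    moreover have "norm (c k) \<le> 1 \<or> norm (c k) \<le> norm (c k)^2"
    proof (cases "norm (c k) \<le> 1")
      case False
      then have "norm (c k) * 1 \<le> norm (c k) * norm (c k)" by (intro mult_left_mono) auto
      then show ?thesis by (simp add: power2_eq_square)
    qed simp
    ultimately show ?thesis by linarith
  qed
  show ?thesis
  proof (intro exI[of _ r] conjI allI impI r1)
    fix a :: complex and n :: nat assume an: "norm a < 1 \<and> r < norm a"
    then have a: "norm a < 1" and ra: "r < norm a" by auto
    define d where "d = kd n a"
    define S where "S = (\<Sum>k. norm (d k)^2)"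
    define N where "N = sqrt S"
    have dS: "summable (\<lambda>k. norm (d k)^2)" unfolding d_def by (rule kd_sq_summable[OF a])
    have Slow: "(fact n)^2 / (1 - norm a^2) \<le> S" unfolding S_def d_def by (rule kd_sq_lower[OF a])
    have x1: "1 - norm a^2 > 0" using a by (simp add: abs_square_less_1)
    have Spos: "S > 0" using Slow x1 by (smt (verit) divide_pos_pos fact_gt_zero zero_less_power)
    have Npos: "N > 0" using Spos by (simp add: N_def)
    have NN: "N^2 = S" using Spos by (simp add: N_def)
    define T where "T k = norm (c k) * norm (d k)" for k
    have T0: "0 \<le> T k" for k by (simp add: T_def)
    have Tsum: "summable T"
    proof (rule summable_comparison_test'[OF summable_add[OF c2 dS], where N = 0])
      fix k
      have "2 * (norm (c k) * norm (d k)) \<le> norm (c k)^2 + norm (d k)^2"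
        using sum_squares_bound[of "norm (c k)" "norm (d k)"] by (simp add: mult.assoc)
      moreover have "0 \<le> norm (c k) * norm (d k)" by simp
      moreover have "norm (T k) = norm (c k) * norm (d k)" by (simp add: T_def)
      ultimately show "norm (T k) \<le> norm (c k)^2 + norm (d k)^2"
        by linarith
    qed
    have ctail: "summable (\<lambda>j. norm (c (j + K))^2)"
      using c2 summable_iff_shift[where f="\<lambda>k. norm (c k)^2" and k=K] by simp
    have dtailS: "summable (\<lambda>j. norm (d (j + K))^2)"
      using dS summable_iff_shift[where f="\<lambda>k. norm (d k)^2" and k=K] by simp
    have tailc: "(\<Sum>j. norm (c (j + K))^2) < \<delta>^2"
      using K suminf_nonneg[OF ctail] by simp
    have dtail: "(\<Sum>j. norm (d (j + K))^2) \<le> S"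
      using suminf_split_initial_segment[OF dS, of K] by (simp add: S_def sum_nonneg)
    define t where "t = N / \<delta>"
    have t: "t > 0" using Npos \<delta> by (simp add: t_def)
    have tail: "(\<Sum>j. T (j + K)) < \<delta> * N"
    proof -
      have sm: "(\<lambda>j. (t * norm (c (j + K))^2 + norm (d (j + K))^2 / t) / 2) sums
          ((t * (\<Sum>j. norm (c (j + K))^2) + (\<Sum>j. norm (d (j + K))^2) / t) / 2)"
        by (intro sums_divide sums_add sums_mult summable_sums ctail dtailS)
      have TS: "summable (\<lambda>j. T (j + K))"
        using Tsum summable_iff_shift[where f=T and k=K] by simp
      have "(\<Sum>j. T (j + K)) \<le> (t * (\<Sum>j. norm (c (j + K))^2) + (\<Sum>j. norm (d (j + K))^2) / t) / 2"
        using suminf_le[OF _ TS sums_summable[OF sm]] sums_unique[OF sm] amgm[OF t] by (simp add: T_def)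
      also have "\<dots> < (\<delta> * N + \<delta> * N) / 2"
      proof -
        have "t * (\<Sum>j. norm (c (j + K))^2) < t * \<delta>^2" using tailc t by simp
        also have "t * \<delta>^2 = \<delta> * N" using \<delta> by (simp add: t_def power2_eq_square)
        finally have 1: "t * (\<Sum>j. norm (c (j + K))^2) < \<delta> * N" .
        have "(\<Sum>j. norm (d (j + K))^2) / t \<le> S / t" using dtail t by (simp add: divide_right_mono)
        also have "S / t = \<delta> * N" using Npos \<delta> NN by (simp add: t_def power2_eq_square field_simps)
        finally have 2: "(\<Sum>j. norm (d (j + K))^2) / t \<le> \<delta> * N" .
        from 1 2 show ?thesis by (simp add: field_simps)
      qed
      finally show ?thesis by (simp add: mult.commute)
    qed
    have head: "(\<Sum>k<K. T k) \<le> fact n * Q"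
    proof -
      have "T k \<le> (1 + C) * (fact n * 2^K)" if "k \<in> {..<K}" for k
        unfolding T_def d_def
        using that C0 by (intro mult_mono cb kd_bound[OF a]) auto
      then have "(\<Sum>k<K. T k) \<le> of_nat (card {..<K}) * ((1 + C) * (fact n * 2^K))"
        by (rule sum_bounded_above)
      then show ?thesis by (simp add: Q_def mult_ac)
    qed
    have headd: "fact n * Q \<le> \<delta> * N"
    proof (rule power2_le_imp_le)
      define y where "y = norm a"
      define D where "D = \<delta>^2 / (Q^2 + 1)"
      have D0: "D \<ge> 0" using Qp by (simp add: D_def)
      have "2 * (1 - y) - (1 - y^2) = (1 - y)^2" by (simp add: power2_eq_square algebra_simps)
      then have 1: "1 - y^2 \<le> 2 * (1 - y)" by (smt (verit) zero_le_power2)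
      have "1 - \<delta>^2 / (2 * (Q^2 + 1)) \<le> r" by (simp add: r_def)
      moreover have "\<delta>^2 / (2 * (Q^2 + 1)) = D / 2" by (simp add: D_def)
      ultimately have "1 - D / 2 < y" using ra by (simp add: y_def)
      then have "1 - y^2 \<le> D" using 1 by (smt (verit) field_sum_of_halves)
      then have "Q^2 * (1 - y^2) \<le> Q^2 * D" by (intro mult_left_mono) auto
      also have "Q^2 * D = \<delta>^2 * (Q^2 / (Q^2 + 1))" by (simp add: D_def)
      also have "\<dots> \<le> \<delta>^2 * 1" using Qp by (intro mult_left_mono) auto
      finally have "Q^2 * (1 - y^2) \<le> \<delta>^2" by simp
      then have "Q^2 \<le> \<delta>^2 / (1 - norm a^2)" using x1 by (simp add: y_def pos_le_divide_eq)
      then have "(fact n)^2 * Q^2 \<le> (fact n)^2 * (\<delta>^2 / (1 - norm a^2))" by (intro mult_left_mono) auto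
      also have "\<dots> = \<delta>^2 * ((fact n)^2 / (1 - norm a^2))" by simp
      also have "\<dots> \<le> \<delta>^2 * S" using Slow by (intro mult_left_mono) auto
      finally show "(fact n * Q)^2 \<le> (\<delta> * N)^2" by (simp add: power_mult_distrib NN)
      show "0 \<le> \<delta> * N" using \<delta> Npos by simp
    qed
    have Tlt: "(\<Sum>k. T k) < \<epsilon> * N"
      using suminf_split_initial_segment[OF Tsum, of K] tail head headd by (simp add: \<delta>_def)
    have nrm: "norm (c k * cnj (d k / complex_of_real N)) = T k / N" for k
      using Npos by (simp add: T_def norm_mult norm_divide)
    have "norm (\<Sum>k. c k * cnj (d k / complex_of_real N)) \<le> (\<Sum>k. norm (c k * cnj (d k / complex_of_real N)))"
      by (rule summable_norm) (unfold nrm, rule summable_divide[OF Tsum])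
    also have "\<dots> = (\<Sum>k. T k) / N" unfolding nrm by (rule suminf_divide[OF Tsum])
    also have "\<dots> < \<epsilon>" using Tlt Npos by (simp add: divide_less_eq)
    finally show "norm (\<Sum>k. c k * cnj (kd n a k / complex_of_real (sqrt (\<Sum>k. norm (kd n a k)^2)))) < \<epsilon>"
      by (simp add: d_def S_def N_def)
  qed
qed

theorem lemma3:
  fixes f :: "complex \<Rightarrow> complex"
  assumes "f \<in> hardy2"
  shows "\<forall>\<epsilon>>0. \<exists>r<1. \<forall>a n. cmod a < 1 \<and> cmod a > r \<longrightarrow>
           cmod (h2_inner f (ekern n a)) < \<epsilon>"
proof (intro allI impI)
  fix \<epsilon> :: real assume e: "\<epsilon> > 0"
  from final_est[OF hardy_coeffs(3)[OF assms] e] obtain r where r: "r < 1"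
    and H: "\<And>a n. norm a < 1 \<and> norm a > r \<Longrightarrow>
     norm (\<Sum>k. (deriv ^^ k) f 0 / fact k * cnj (kd n a k / complex_of_real (sqrt (\<Sum>k. norm (kd n a k)^2)))) < \<epsilon>"
    by blast
  show "\<exists>r<1. \<forall>a n. cmod a < 1 \<and> cmod a > r \<longrightarrow> cmod (h2_inner f (ekern n a)) < \<epsilon>"
  proof (intro exI[of _ r] conjI allI impI r)
    fix a :: complex and n :: nat assume an: "cmod a < 1 \<and> cmod a > r"
    then show "cmod (h2_inner f (ekern n a)) < \<epsilon>"
      using H[OF an] inner_ekern[OF assms, of a n] by simp
  qed
qed

end
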